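(* Let $m \in \mathbb{N}$ with $m\ge 2$ and $r_m = \sqrt{\frac{2(m+1)}{m}}$, and let $\Phi$ be the map defined in the context. Then for all $[x],[y]\in\mathbb{RP}^m(r_m)$ (with representatives $x,y \in \mathbb{S}^m(r_m)$), $$\|\Phi([x]) - \Phi([y])\|^2 = -\frac{m}{2(m+1)}\langle x,y\rangle^2 + \frac{2(m+1)}{m}.$$ Consequently, for any random variable $X$ with values in $\mathbb{RP}^m(r_m)$, $$\operatorname{argmax}_{[y]\in\mathbb{RP}^m(r_m)} \mathbb{E}[\langle X,y\rangle^2] = \operatorname{argmin}_{[y]\in\mathbb{RP}^m(r_m)} \mathbb{E}\big[\|\Phi([X]) - \Phi([y])\|^2\big].$$
   Context: For $r>0$, $\mathbb{S}^m(r)\subset\mathbb{R}^{m+1}$ is the sphere of radius $r$ centered at $0$, and $\mathbb{RP}^m(r) = \{[x] : x \in \mathbb{S}^m(r)\}$ with $[x]=\{x,-x\}$; $\langle x,y\rangle^2$ does not depend on the choice of representatives. Define $F_m:\mathbb{R}^{m+1}\times\mathbb{R}^{m+1}\to\mathbb{R}^{\frac{m(m+3)}{2}}$ recursively by $F_1((x_1,x_2),(y_1,y_2)) = (x_1y_1 - x_2y_2,\ x_1y_2 + x_2y_1)$ and, for $x,y\in\mathbb{R}^{m+1}$, $x_{m+2},y_{m+2}\in\mathbb{R}$, $F_{m+1}((x,x_{m+2}),(y,y_{m+2})) = \big(F_m(x,y),\ x_{m+2}y + y_{m+2}x,\ \tau_{m+1}(\langle x,y\rangle - (m+1)x_{m+2}y_{m+2})\big)$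 with $\tau_{m+1} = \sqrt{\frac{2}{(m+1)(m+2)}}$. Then $\Phi([x]) := \frac12\sqrt{\frac{m}{2(m+1)}}\,F_m(x,x)$ for $x \in \mathbb{S}^m(r_m)$ (this is an isometric embedding of $\mathbb{RP}^m(r_m)$, with the metric induced from the round sphere, into the unit sphere $\mathbb{S}^{\frac{m(m+3)}{2}-1}$). *)

theory Defs
  imports "HOL-Probability.Probability"
begin

text \<open>Points of R^(m+1) are represented as functions nat => real; only the
coordinates 0..m are used (coordinate i corresponds to x_(i+1)).\<close>

definition sph :: "nat \<Rightarrow> real \<Rightarrow> (nat \<Rightarrow> real) set" where
  "sph m r = {x. (\<forall>i>m. x i = 0) \<and> (\<Sum>i\<le>m. (x i)\<^sup>2) = r\<^sup>2}"

definition inner_m :: "nat \<Rightarrow> (nat \<Rightarrow> real) \<Rightarrow> (nat \<Rightarrow> real) \<Rightarrow> real" where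
  "inner_m m x y = (\<Sum>i\<le>m. x i * y i)"

definition proj_cls :: "(nat \<Rightarrow> real) \<Rightarrow> (nat \<Rightarrow> real) set" where
  "proj_cls x = {x, - x}"

definition RP :: "nat \<Rightarrow> real \<Rightarrow> (nat \<Rightarrow> real) set set" where
  "RP m r = proj_cls ` sph m r"

definition tau :: "nat \<Rightarrow> real" where
  "tau n = sqrt (2 / (real n * (real n + 1)))"

text \<open>F m acts on real lists of length m+1 and returns a list of length m(m+3)/2.\<close>
fun F :: "nat \<Rightarrow> real list \<Rightarrow> real list \<Rightarrow> real list" where
  "F 0 xs ys = []"
| "F (Suc 0) xs ys = [xs!0 * ys!0 - xs!1 * ys!1, xs!0 * ys!1 + xs!1 * ys!0]"
| "F (Suc (Suc k)) xs ys =
     (let m = Suc k; x = take (m+1) xs; y = take (m+1) ys; a = xs ! (m+1); b = ys ! (m+1)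
      in F m x y @ map2 (\<lambda>xi yi. a * yi + b * xi) x y
           @ [tau (m+1) * (sum_list (map2 (*) x y) - real (m+1) * a * b)])"

definition vec_list :: "nat \<Rightarrow> (nat \<Rightarrow> real) \<Rightarrow> real list" where
  "vec_list m x = map x [0..<m+1]"

definition Phi :: "nat \<Rightarrow> (nat \<Rightarrow> real) \<Rightarrow> real list" where
  "Phi m x = map (\<lambda>t. (1/2) * sqrt (real m / (2 * (real m + 1))) * t)
               (F m (vec_list m x) (vec_list m x))"

definition sqdist_list :: "real list \<Rightarrow> real list \<Rightarrow> real" where
  "sqdist_list u v = sum_list (map2 (\<lambda>a b. (a - b)\<^sup>2) u v)"

definition r_m :: "nat \<Rightarrow> real" where
  "r_m m = sqrt (2 * (real m + 1) / real m)"

end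

theory Submission
  imports Defs
begin

definition ip :: "real list \<Rightarrow> real list \<Rightarrow> real" where
  "ip u v = sum_list (map2 (*) u v)"

lemma ip_append: "length u1 = length v1 \<Longrightarrow> ip (u1 @ u2) (v1 @ v2) = ip u1 v1 + ip u2 v2"
  by (simp add: ip_def)

lemma ip_scale: "ip (map (\<lambda>t. c*t) u) (map (\<lambda>t. d*t) v) = c*d*ip u v"
proof (induction u arbitrary: v)
  case Nil then show ?case by (simp add: ip_def)
next
  case (Cons a u) then show ?case by (cases v) (auto simp: ip_def algebra_simps)
qed

lemma map2_dup: "map2 (\<lambda>xi yi. a * yi + a * xi) u u = map (\<lambda>t. (2*a)*t) (u::real list)"
  by (induction u) (auto simp: algebra_simps)

lemma ip_single: "ip [a] [b] = a*b" by (simp add: ip_def)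

lemma split_last': "length x = Suc n \<Longrightarrow> x = take n x @ [x!n]"
  by (metis lessI take_Suc_conv_app_nth take_all order_refl)

lemma tau_sq: "(tau n)^2 = 2 / (real n * (real n + 1))"
  unfolding tau_def by (simp add: real_sqrt_pow2)

lemma alg: fixes K X Y P a b :: real assumes "K \<ge> 0" shows "2*P^2 - 2/(K+2)*X*Y + 4*a*b*P + 2/((K+2)*(K+3))*(X-(K+2)*a*a)*(Y-(K+2)*b*b) = 2*(P+a*b)^2 - 2/(K+3)*(X+a*a)*(Y+b*b)"
proof -
  have h: "K+2 \<noteq> 0" "K+3\<noteq>0" "(K+2)*(K+3) \<noteq> 0" using assms by auto
  have e: "2/(K+2) = (2*(K+3)) / ((K+2)*(K+3))" "2/(K+3) = (2*(K+2)) / ((K+2)*(K+3))" using h by (auto simp: field_simps)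
  define D where "D = (K+2)*(K+3)"
  have "D \<noteq> 0" using h D_def by auto
  then show ?thesis unfolding e D_def[symmetric] by (simp add: field_simps power2_eq_square) (simp add: D_def algebra_simps)
qed

lemma key:
  assumes "length x = Suc k + 1" "length y = Suc k + 1"
  shows "length (F (Suc k) x x) = length (F (Suc k) y y) \<and>
         ip (F (Suc k) x x) (F (Suc k) y y) = 2 * (ip x y)^2 - 2 / (real k + 2) * ip x x * ip y y"
  using assms
proof (induction k arbitrary: x y)
  case 0
  then obtain a b where x: "x = [a,b]"
    by (auto simp: length_Suc_conv)
  obtain c d where y: "y = [c,d]" using 0
    by (auto simp: length_Suc_conv)
  show ?case unfolding x y by (simp add: ip_def power2_eq_square algebra_simps divide_simps)
next
  case (Suc k)
  define x' where "x' = take (k+2) x"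
  define y' where "y' = take (k+2) y"
  define a where "a = x!(k+2)"
  define b where "b = y!(k+2)"
  have lx: "length x' = Suc k + 1" "length y' = Suc k + 1" using Suc.prems by (auto simp: x'_def y'_def)
  have IH: "length (F (Suc k) x' x') = length (F (Suc k) y' y')"
     "ip (F (Suc k) x' x') (F (Suc k) y' y') = 2 * (ip x' y')^2 - 2 / (real k + 2) * ip x' x' * ip y' y'"
    using Suc.IH[OF lx] by auto
  have xe: "x = x' @ [a]" unfolding x'_def a_def using Suc.prems split_last'[of x "k+2"] by auto
  have ye: "y = y' @ [b]" unfolding y'_def b_def using Suc.prems split_last'[of y "k+2"] by auto
  have ipxy: "ip x y = ip x' y' + a*b" "ip x x = ip x' x' + a*a" "ip y y = ip y' y' + b*b"
    using lx by (simp_all add: xe ye ip_append ip_single)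
  have Fx: "F (Suc (Suc k)) x x = F (Suc k) x' x' @ map (\<lambda>t. (2*a)*t) x' @ [tau (k+2) * (ip x' x' - real (k+2) * a * a)]"
    unfolding x'_def a_def by (simp add: Let_def map2_dup ip_def numeral_2_eq_2)
  have Fy: "F (Suc (Suc k)) y y = F (Suc k) y' y' @ map (\<lambda>t. (2*b)*t) y' @ [tau (k+2) * (ip y' y' - real (k+2) * b * b)]"
    unfolding y'_def b_def by (simp add: Let_def map2_dup ip_def numeral_2_eq_2)
  have "ip (F (Suc (Suc k)) x x) (F (Suc (Suc k)) y y)
      = ip (F (Suc k) x' x') (F (Suc k) y' y') + 4*a*b*ip x' y'
        + (tau (k+2))^2 * (ip x' x' - real (k+2) * a * a) * (ip y' y' - real (k+2) * b * b)"
    unfolding Fx Fy using IH(1) lx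
    by (simp add: ip_append ip_scale ip_single power2_eq_square algebra_simps)
  also have "\<dots> = 2 * (ip x y)^2 - 2 / (real (Suc k) + 2) * ip x x * ip y y"
  proof -
    have t2: "(tau (k+2))^2 = 2/((real k+2)*(real k+3))" by (simp add: tau_sq algebra_simps)
    have r: "real (k+2) = real k + 2" "real (Suc k) + 2 = real k + 3" by auto
    show ?thesis unfolding IH(2) ipxy t2 r
      using alg[where K="real k" and X="ip x' x'" and Y="ip y' y'" and P="ip x' y'" and a=a and b=b] by (simp add: mult.assoc)
  qed
  finally have eq: "ip (F (Suc (Suc k)) x x) (F (Suc (Suc k)) y y) = 2 * (ip x y)^2 - 2 / (real (Suc k) + 2) * ip x x * ip y y" .
  have len: "length (F (Suc (Suc k)) x x) = length (F (Suc (Suc k)) y y)" unfolding Fx Fy using IH(1) lx by simp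
  show ?case using len eq by blast
qed

lemma sqd: "length u = length v \<Longrightarrow> sqdist_list u v = ip u u + ip v v - 2 * ip u v"
proof (induction u arbitrary: v)
  case Nil then show ?case by (simp add: sqdist_list_def ip_def)
next
  case (Cons a u) then show ?case
    by (cases v) (auto simp: sqdist_list_def ip_def power2_eq_square algebra_simps)
qed

lemma ip_vec: "ip (vec_list m x) (vec_list m y) = inner_m m x y"
proof -
  have "ip (vec_list m x) (vec_list m y) = sum_list (map (\<lambda>i. x i * y i) [0..<m+1])"
    by (simp add: ip_def vec_list_def zip_map_map zip_same_conv_map comp_def)
  also have "\<dots> = (\<Sum>i\<in>{0..<m+1}. x i * y i)" by (simp add: sum_list_distinct_conv_sum_set)
  also have "{0..<m+1} = {..m}" by auto
  finally show ?thesis by (simp add: inner_m_def)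
qed

lemma len_vec: "length (vec_list m x) = m + 1" by (simp add: vec_list_def)

lemma inner_self: "x \<in> sph m r \<Longrightarrow> inner_m m x x = r^2"
  by (simp add: sph_def inner_m_def power2_eq_square)

lemma alg3: fixes M P :: real assumes "M>0" shows "M/(8*(M+1)) * (4*(2*(M+1)/M)^2 - 4*P^2) = -(M/(2*(M+1)))*P^2 + 2*(M+1)/M"
proof -
  define q where "q = (M+1)/M"
  have h: "M+1 \<noteq> 0" "M \<noteq> 0" "q \<noteq> 0" using assms by (auto simp: q_def)
  have e: "M/(8*(M+1)) = 1/(8*q)" "M/(2*(M+1)) = 1/(2*q)" using h by (auto simp: q_def)
  have 1: "1/(8*q) * (4*(2*q)^2) = 2*q" using h by (simp add: field_simps power2_eq_square)
  have 2: "1/(8*q) * (4*P^2) = (1/(2*q))*P^2" using h by (simp add: field_simps power2_eq_square)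
  show ?thesis unfolding e mult.assoc[of 2 "M+1", symmetric] times_divide_eq_right[symmetric] q_def[symmetric]
    using 1 2 by (simp add: right_diff_distrib)
qed

lemma part1:
  assumes m: "m \<ge> 2" and x: "x \<in> sph m (r_m m)" and y: "y \<in> sph m (r_m m)"
  shows "sqdist_list (Phi m x) (Phi m y)
              = - (real m / (2 * (real m + 1))) * (inner_m m x y)\<^sup>2 + 2 * (real m + 1) / real m"
proof -
  obtain k where mk: "m = Suc k" using m by (cases m) auto
  define c where "c = (1/2) * sqrt (real m / (2 * (real m + 1)))"
  define u where "u = F m (vec_list m x) (vec_list m x)"
  define w where "w = F m (vec_list m y) (vec_list m y)"
  have Phx: "Phi m x = map (\<lambda>t. c*t) u" and Phy: "Phi m y = map (\<lambda>t. c*t) w"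
    by (simp_all add: Phi_def c_def u_def w_def)
  have lv: "length (vec_list m z) = Suc k + 1" for z by (simp add: len_vec mk)
  have K: "\<And>a b. length (F m (vec_list m a) (vec_list m a)) = length (F m (vec_list m b) (vec_list m b)) \<and>
     ip (F m (vec_list m a) (vec_list m a)) (F m (vec_list m b) (vec_list m b)) =
     2 * (inner_m m a b)^2 - 2 / (real m + 1) * inner_m m a a * inner_m m b b"
    using key[OF lv lv] unfolding mk ip_vec by (simp add: add_ac)
  define R where "R = (r_m m)^2"
  have R: "R = 2 * (real m + 1) / real m" unfolding R_def r_m_def using m by simp
  have xx: "inner_m m x x = R" "inner_m m y y = R" using inner_self x y R_def by auto
  have c2: "c^2 = real m / (8 * (real m + 1))" unfolding c_def
    by (simp add: power_mult_distrib real_sqrt_pow2 power2_eq_square)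
  have "sqdist_list (Phi m x) (Phi m y) = c^2 * (ip u u + ip w w - 2 * ip u w)"
    unfolding Phx Phy using K[of x y] unfolding u_def w_def
    by (subst sqd) (simp_all add: ip_scale power2_eq_square algebra_simps)
  also have "\<dots> = c^2 * (4 * R^2 - 4 * (inner_m m x y)^2)"
  proof -
    have "ip u u = 2 * R^2 - 2 / (real m + 1) * R * R" using K[of x x] xx unfolding u_def by simp
    moreover have "ip w w = 2 * R^2 - 2 / (real m + 1) * R * R" using K[of y y] xx unfolding w_def by simp
    moreover have "ip u w = 2 * (inner_m m x y)^2 - 2 / (real m + 1) * R * R" using K[of x y] xx unfolding u_def w_def by simp
    ultimately have "ip u u + ip w w - 2 * ip u w = 4 * R^2 - 4 * (inner_m m x y)^2" by linarith
    then show ?thesis by simp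
  qed
  also have "\<dots> = - (real m / (2 * (real m + 1))) * (inner_m m x y)\<^sup>2 + 2 * (real m + 1) / real m"
    unfolding c2 R using m alg3[of "real m" "inner_m m x y"] by simp
  finally show ?thesis .
qed




lemma coord_bound: assumes "x \<in> sph m r" "i \<le> m" shows "\<bar>x i\<bar> \<le> \<bar>r\<bar>"
proof -
  have "(x i)^2 \<le> (\<Sum>j\<le>m. (x j)^2)" using assms(2) by (intro member_le_sum) auto
  then have "(x i)^2 \<le> r^2" using assms(1) by (simp add: sph_def)
  then show ?thesis by (simp add: abs_le_square_iff)
qed

lemma inner_bound: assumes "x \<in> sph m r" "z \<in> sph m r"
  shows "\<bar>inner_m m x z\<bar> \<le> real (m+1) * r^2"
proof -
  have "\<bar>inner_m m x z\<bar> \<le> (\<Sum>i\<le>m. \<bar>x i * z i\<bar>)" unfolding inner_m_def by (rule sum_abs)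
  also have "\<dots> \<le> (\<Sum>i\<le>m. r^2)"
  proof (rule sum_mono)
    fix i assume "i \<in> {..m}"
    then have "\<bar>x i\<bar> \<le> \<bar>r\<bar>" "\<bar>z i\<bar> \<le> \<bar>r\<bar>" using coord_bound assms by auto
    then have "\<bar>x i\<bar> * \<bar>z i\<bar> \<le> \<bar>r\<bar> * \<bar>r\<bar>" by (intro mult_mono) auto
    then show "\<bar>x i * z i\<bar> \<le> r^2" by (simp add: abs_mult power2_eq_square)
  qed
  finally show ?thesis by simp
qed

lemma sq_bound: assumes "x \<in> sph m r" "z \<in> sph m r"
  shows "norm ((inner_m m x z)^2) \<le> (real (m+1) * r^2)^2"
proof -
  have "\<bar>inner_m m x z\<bar>^2 \<le> (real (m+1) * r^2)^2"
    using inner_bound[OF assms] by (intro power_mono) auto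
  then show ?thesis by simp
qed

theorem theorem3p14:
  fixes m :: nat and M :: "'a measure" and X :: "'a \<Rightarrow> nat \<Rightarrow> real"
  assumes "m \<ge> 2"
  shows "(\<forall>x \<in> sph m (r_m m). \<forall>y \<in> sph m (r_m m).
            sqdist_list (Phi m x) (Phi m y)
              = - (real m / (2 * (real m + 1))) * (inner_m m x y)\<^sup>2 + 2 * (real m + 1) / real m)
     \<and> (prob_space M \<longrightarrow> (\<forall>i. (\<lambda>\<omega>. X \<omega> i) \<in> borel_measurable M)
        \<longrightarrow> (\<forall>\<omega>\<in>space M. X \<omega> \<in> sph m (r_m m))
        \<longrightarrow> {proj_cls y | y. y \<in> sph m (r_m m) \<and>
               (\<forall>z \<in> sph m (r_m m). (\<integral>\<omega>. (inner_m m (X \<omega>) z)\<^sup>2 \<partial>M)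
                                      \<le> (\<integral>\<omega>. (inner_m m (X \<omega>) y)\<^sup>2 \<partial>M))}
          = {proj_cls y | y. y \<in> sph m (r_m m) \<and>
               (\<forall>z \<in> sph m (r_m m). (\<integral>\<omega>. sqdist_list (Phi m (X \<omega>)) (Phi m y) \<partial>M)
                                      \<le> (\<integral>\<omega>. sqdist_list (Phi m (X \<omega>)) (Phi m z) \<partial>M))})"
proof (intro conjI impI)
  show "\<forall>x \<in> sph m (r_m m). \<forall>y \<in> sph m (r_m m).
            sqdist_list (Phi m x) (Phi m y)
              = - (real m / (2 * (real m + 1))) * (inner_m m x y)\<^sup>2 + 2 * (real m + 1) / real m"
    using part1[OF assms] by blast
  assume ps: "prob_space M" and meas: "\<forall>i. (\<lambda>\<omega>. X \<omega> i) \<in> borel_measurable M"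
    and inS: "\<forall>\<omega>\<in>space M. X \<omega> \<in> sph m (r_m m)"
  interpret prob_space M by fact
  define S where "S = sph m (r_m m)"
  define k where "k = real m / (2 * (real m + 1))"
  define C where "C = 2 * (real m + 1) / real m"
  have kpos: "k > 0" using assms by (simp add: k_def)
  have [measurable]: "(\<lambda>\<omega>. X \<omega> i) \<in> borel_measurable M" for i using meas by blast
  define f where "f z = (\<lambda>\<omega>. (inner_m m (X \<omega>) z)\<^sup>2)" for z
  have integ: "integrable M (f z)" if "z \<in> S" for z
  proof (rule integrable_const_bound[where B="(real (m+1) * (r_m m)^2)^2"])
    show "AE x in M. norm (f z x) \<le> (real (m+1) * (r_m m)^2)^2"
      using inS that sq_bound unfolding f_def S_def by (intro AE_I2) blast
    show "f z \<in> borel_measurable M" unfolding f_def inner_m_def by measurable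
  qed
  have eqI: "(\<integral>\<omega>. sqdist_list (Phi m (X \<omega>)) (Phi m y) \<partial>M) = - k * integral\<^sup>L M (f y) + C"
    if "y \<in> S" for y
  proof -
    have "(\<integral>\<omega>. sqdist_list (Phi m (X \<omega>)) (Phi m y) \<partial>M) = (\<integral>\<omega>. (- k) * f y \<omega> + C \<partial>M)"
      unfolding f_def k_def C_def
    proof (rule Bochner_Integration.integral_cong[OF refl])
      fix \<omega> assume "\<omega> \<in> space M"
      then show "sqdist_list (Phi m (X \<omega>)) (Phi m y) = - (real m / (2 * (real m + 1))) * (inner_m m (X \<omega>) y)\<^sup>2 + 2 * (real m + 1) / real m"
        using inS that part1[OF assms] unfolding S_def by auto
    qed
    also have "\<dots> = - k * integral\<^sup>L M (f y) + C"
      using integ[OF that] by (simp add: prob_space)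
    finally show ?thesis .
  qed
  have iff: "(\<forall>z \<in> S. integral\<^sup>L M (f z) \<le> integral\<^sup>L M (f y)) \<longleftrightarrow>
     (\<forall>z \<in> S. (\<integral>\<omega>. sqdist_list (Phi m (X \<omega>)) (Phi m y) \<partial>M)
                \<le> (\<integral>\<omega>. sqdist_list (Phi m (X \<omega>)) (Phi m z) \<partial>M))" if "y \<in> S" for y
    using eqI that kpos by (auto simp: mult_le_cancel_left_pos)
  show "{proj_cls y | y. y \<in> sph m (r_m m) \<and>
               (\<forall>z \<in> sph m (r_m m). (\<integral>\<omega>. (inner_m m (X \<omega>) z)\<^sup>2 \<partial>M)
                                      \<le> (\<integral>\<omega>. (inner_m m (X \<omega>) y)\<^sup>2 \<partial>M))}
          = {proj_cls y | y. y \<in> sph m (r_m m) \<and>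
               (\<forall>z \<in> sph m (r_m m). (\<integral>\<omega>. sqdist_list (Phi m (X \<omega>)) (Phi m y) \<partial>M)
                                      \<le> (\<integral>\<omega>. sqdist_list (Phi m (X \<omega>)) (Phi m z) \<partial>M))}"
    using iff unfolding f_def S_def by blast
qed

end
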